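(* Let $X$ be a compact metric space and $T:X\to X$ a surjective local homeomorphism such that $Sp_l(X,T)$ is a finite set consisting of isolated points of $X$. Then \[{\rm dim}_{\rm am}(X,T)\le{\rm dim}_{\rm tow}(X,T).\]
   Context: $Sp_l(X,T)=\{x:|T^{-1}(\{x\})|\ge2\}$. For $n\in\mathbb{Z}$ and $x\in X$, $T^n(\{x\})$ is the image under $T^n$ if $n\ge0$ and the preimage under $T^{|n|}$ if $n<0$. $P_d(\mathbb{Z})$ is the set of probability measures on $\mathbb{Z}$ supported on at most $d+1$ points, with metric $\rho(\mu,\nu)=\sum_{m}|\mu(m)-\nu(m)|$ and $\mathbb{Z}$-action $\alpha_n(\mu)(m)=\mu(m-n)$. A map $\varphi:X\to P_d(\mathbb{Z})$ is $(E,\varepsilon)$-equivariant ($E\subseteq\mathbb{Z}$ finite, $\varepsilon>0$) if $\rho(\varphi(y),\alpha_n(\varphi(x)))<\varepsilon$ for all $n\in E$, $x\in X$, $y\in T^n(\{x\})$. ${\rm dim}_{\rm am}(X,T)$ is the least $d$ such that for every finite $E$ and $\varepsilon>0$ there is a continuous $(E,\varepsilon)$-equivariant $\varphi:X\to P_d(\mathbb{Z})$. Tower dimension ${\rm dim}_{\rm tow}(X,T)$: least $d$ such that for every finite $E\subseteq\mathbb{Z}$ there are finitely many pairs $(V_i,S_i)$, $V_i$ open, $S_i\subseteq\mathbb{N}$ finite, with $T^{-m}(\overline{V_i})\cap T^{-n}(\overline{V_i})=\varnothing$ for distinct $m,n\in S_i$ ($T^{-j}$ = preimage under $T^j$), the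 family $\{T^{-n}(V_i):n\in S_i\}$ partitionable into at most $d+1$ subfamilies of pairwise disjoint sets and covering $X$, and each $x$ lying in some $T^{-n}(V_i)$ with $n\in S_i$, $E+n\subseteq S_i$. Dimensions are $\infty$ if no such $d$ exists. *)

theory Defs
  imports "HOL-Analysis.Analysis" "HOL-Library.Extended_Nat"
begin

text \<open>The compact metric space X is the whole carrier of a type 'a of class metric_space.\<close>

definition local_homeo :: "('a::topological_space \<Rightarrow> 'a) \<Rightarrow> bool" where
  "local_homeo T \<longleftrightarrow> (\<forall>x. \<exists>U g. open U \<and> x \<in> U \<and> open (T ` U) \<and> homeomorphism U (T ` U) T g)"

definition Sp_l :: "('a \<Rightarrow> 'a) \<Rightarrow> 'a set" where
  "Sp_l T = {x. \<exists>y z. y \<noteq> z \<and> T y = x \<and> T z = x}"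

definition Tn :: "('a \<Rightarrow> 'a) \<Rightarrow> int \<Rightarrow> 'a \<Rightarrow> 'a set" where
  "Tn T n x = (if n \<ge> 0 then {(T ^^ nat n) x} else {y. (T ^^ nat (- n)) y = x})"

definition supp_int :: "(int \<Rightarrow> real) \<Rightarrow> int set" where
  "supp_int \<mu> = {m. \<mu> m \<noteq> 0}"

definition Pd :: "nat \<Rightarrow> (int \<Rightarrow> real) set" where
  "Pd d = {\<mu>. (\<forall>m. \<mu> m \<ge> 0) \<and> finite (supp_int \<mu>) \<and> card (supp_int \<mu>) \<le> d + 1
              \<and> (\<Sum>m\<in>supp_int \<mu>. \<mu> m) = 1}"

definition rho :: "(int \<Rightarrow> real) \<Rightarrow> (int \<Rightarrow> real) \<Rightarrow> real" where
  "rho \<mu> \<nu> = (\<Sum>m\<in>supp_int \<mu> \<union> supp_int \<nu>. \<bar>\<mu> m - \<nu> m\<bar>)"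

definition alpha :: "int \<Rightarrow> (int \<Rightarrow> real) \<Rightarrow> (int \<Rightarrow> real)" where
  "alpha n \<mu> = (\<lambda>m. \<mu> (m - n))"

definition equivariant_approx ::
  "('a \<Rightarrow> 'a) \<Rightarrow> int set \<Rightarrow> real \<Rightarrow> ('a \<Rightarrow> (int \<Rightarrow> real)) \<Rightarrow> bool" where
  "equivariant_approx T E \<epsilon> \<phi> \<longleftrightarrow>
     (\<forall>n\<in>E. \<forall>x. \<forall>y\<in>Tn T n x. rho (\<phi> y) (alpha n (\<phi> x)) < \<epsilon>)"

definition rho_continuous :: "('a::metric_space \<Rightarrow> (int \<Rightarrow> real)) \<Rightarrow> bool" where
  "rho_continuous \<phi> \<longleftrightarrow>
     (\<forall>x. \<forall>e>0. \<exists>\<delta>>0. \<forall>y. dist y x < \<delta> \<longrightarrow> rho (\<phi> y) (\<phi> x) < e)"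

definition am_ok :: "('a::metric_space \<Rightarrow> 'a) \<Rightarrow> nat \<Rightarrow> bool" where
  "am_ok T d \<longleftrightarrow> (\<forall>E \<epsilon>. finite E \<and> \<epsilon> > 0 \<longrightarrow>
      (\<exists>\<phi>. (\<forall>x. \<phi> x \<in> Pd d) \<and> rho_continuous \<phi> \<and> equivariant_approx T E \<epsilon> \<phi>))"

definition dim_am :: "('a::metric_space \<Rightarrow> 'a) \<Rightarrow> enat" where
  "dim_am T = (if \<exists>d. am_ok T d then enat (LEAST d. am_ok T d) else \<infinity>)"

text \<open>The family {T^{-n}(V i) : n \<in> S i}
  is treated as indexed by pairs (i,n); its partition into at most d+1 subfamilies of
  pairwise disjoint sets is given by a colouring c with values \<le> d.\<close>
definition tow_ok :: "('a::metric_space \<Rightarrow> 'a) \<Rightarrow> nat \<Rightarrow> bool" where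
  "tow_ok T d \<longleftrightarrow> (\<forall>E::int set. finite E \<longrightarrow>
     (\<exists>(N::nat) (V::nat \<Rightarrow> 'a set) (S::nat \<Rightarrow> nat set).
        (\<forall>i<N. open (V i) \<and> finite (S i)) \<and>
        (\<forall>i<N. \<forall>m\<in>S i. \<forall>n\<in>S i. m \<noteq> n \<longrightarrow>
            (T ^^ m) -` closure (V i) \<inter> (T ^^ n) -` closure (V i) = {}) \<and>
        (\<exists>c::nat \<Rightarrow> nat \<Rightarrow> nat.
            (\<forall>i<N. \<forall>n\<in>S i. c i n \<le> d) \<and>
            (\<forall>i<N. \<forall>n\<in>S i. \<forall>j<N. \<forall>m\<in>S j. (i, n) \<noteq> (j, m) \<and> c i n = c j m \<longrightarrow>
                (T ^^ n) -` V i \<inter> (T ^^ m) -` V j = {})) \<and>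
        (\<Union>i\<in>{..<N}. \<Union>n\<in>S i. (T ^^ n) -` V i) = UNIV \<and>
        (\<forall>x. \<exists>i<N. \<exists>n\<in>S i. x \<in> (T ^^ n) -` V i \<and> (\<forall>e\<in>E. e + int n \<in> int ` S i))))"

definition dim_tow :: "('a::metric_space \<Rightarrow> 'a) \<Rightarrow> enat" where
  "dim_tow T = (if \<exists>d. tow_ok T d then enat (LEAST d. tow_ok T d) else \<infinity>)"

end

theory Submission
  imports Defs
begin


lemma cont_funpow:
  fixes T :: "'a::topological_space \<Rightarrow> 'a"
  assumes "continuous_on UNIV T"
  shows "continuous_on UNIV (T ^^ n)"
proof (induction n)
  case 0 show ?case by (simp add: continuous_on_id)
next
  case (Suc n)
  have "continuous_on UNIV (T \<circ> (T ^^ n))"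
    by (rule continuous_on_compose) (use Suc assms in \<open>auto intro: continuous_on_subset\<close>)
  then show ?case by simp
qed

lemma infdist_lower:
  assumes "A \<noteq> {}" "\<And>a. a \<in> A \<Longrightarrow> \<delta> \<le> dist x a"
  shows "\<delta> \<le> infdist x A"
  using assms unfolding infdist_def by (auto intro: cINF_greatest)

lemma bump:
  fixes C V :: "'a::metric_space set"
  assumes "compact C" "open V" "C \<subseteq> V"
  obtains f :: "'a \<Rightarrow> real" where "continuous_on UNIV f" "\<And>z. 0 \<le> f z" "\<And>z. f z \<le> 1"
    "\<And>z. z \<in> C \<Longrightarrow> f z = 1" "\<And>z. f z \<noteq> 0 \<Longrightarrow> z \<in> V"
proof (cases "C = {}")
  case True
  show ?thesis by (rule that[of "\<lambda>_. 0"]) (auto simp: True continuous_on_const)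
next
  case Cne: False
  show ?thesis
  proof (cases "V = UNIV")
    case True
    show ?thesis by (rule that[of "\<lambda>_. 1"]) (auto simp: True continuous_on_const)
  next
    case False
    have ne: "- V \<noteq> {}" using False by auto
    have cl: "closed (- V)" using assms(2) by auto
    have "continuous_on C (\<lambda>z. infdist z (- V))"
      by (intro continuous_intros)
    then obtain z0 where z0: "z0 \<in> C" "\<And>y. y \<in> C \<Longrightarrow> infdist z0 (- V) \<le> infdist y (- V)"
      using continuous_attains_inf[OF assms(1) Cne] by blast
    define \<delta> where "\<delta> = infdist z0 (- V)"
    have dpos: "\<delta> > 0" unfolding \<delta>_def
      using infdist_pos_not_in_closed[OF cl ne] z0(1) assms(3) by auto
    show ?thesis
    proof (rule that[of "\<lambda>z. min 1 (infdist z (- V) / \<delta>)"])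
      show "continuous_on UNIV (\<lambda>z. min 1 (infdist z (- V) / \<delta>))"
        using dpos by (intro continuous_intros) auto
      show "0 \<le> min 1 (infdist z (- V) / \<delta>)" for z
        using dpos by (simp add: infdist_nonneg)
      show "min 1 (infdist z (- V) / \<delta>) \<le> 1" for z by simp
      show "min 1 (infdist z (- V) / \<delta>) = 1" if "z \<in> C" for z
        using z0(2)[OF that] dpos unfolding \<delta>_def[symmetric] by simp
      show "z \<in> V" if "min 1 (infdist z (- V) / \<delta>) \<noteq> 0" for z
        using that by (cases "z \<in> V") auto
    qed
  qed
qed

lemma norm_lemma:
  fixes a b :: "int \<Rightarrow> real"
  assumes "finite M" "\<And>m. 0 \<le> a m" "\<And>m. 0 \<le> b m"
    and Za: "1 \<le> (\<Sum>m\<in>M. a m)" and Zb: "1 \<le> (\<Sum>m\<in>M. b m)"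
  shows "(\<Sum>m\<in>M. \<bar>a m / (\<Sum>m\<in>M. a m) - b m / (\<Sum>m\<in>M. b m)\<bar>) \<le> 2 * (\<Sum>m\<in>M. \<bar>a m - b m\<bar>)"
proof -
  define A where "A = (\<Sum>m\<in>M. a m)"
  define B where "B = (\<Sum>m\<in>M. b m)"
  define D where "D = (\<Sum>m\<in>M. \<bar>a m - b m\<bar>)"
  have A1: "A \<ge> 1" and B1: "B \<ge> 1" using Za Zb A_def B_def by auto
  have D0: "D \<ge> 0" unfolding D_def by (intro sum_nonneg) auto
  have AB: "\<bar>A - B\<bar> \<le> D"
  proof -
    have "A - B = (\<Sum>m\<in>M. a m - b m)" by (simp add: A_def B_def sum_subtractf)
    then show ?thesis unfolding D_def using sum_abs by (metis)
  qed
  have pt: "\<bar>a m / A - b m / B\<bar> \<le> \<bar>a m - b m\<bar> / A + b m * (\<bar>B - A\<bar> / (A * B))" for m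
  proof -
    have "a m / A - b m / B = (a m - b m) / A + b m * ((B - A) / (A * B))"
      using A1 B1 by (simp add: field_simps)
    also have "\<bar>\<dots>\<bar> \<le> \<bar>a m - b m\<bar> / A + \<bar>b m * ((B - A) / (A * B))\<bar>"
      using A1 by (metis abs_divide abs_of_pos abs_triangle_ineq less_le_trans zero_less_one)
    also have "\<bar>b m * ((B - A) / (A * B))\<bar> = b m * (\<bar>B - A\<bar> / (A * B))"
      using A1 B1 assms(3)[of m] by (simp add: abs_mult)
    finally show ?thesis .
  qed
  have "(\<Sum>m\<in>M. \<bar>a m / A - b m / B\<bar>) \<le> (\<Sum>m\<in>M. \<bar>a m - b m\<bar> / A + b m * (\<bar>B - A\<bar> / (A * B)))"
    by (intro sum_mono pt)
  also have "\<dots> = D / A + B * (\<bar>B - A\<bar> / (A * B))"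
    by (simp add: sum.distrib sum_divide_distrib[symmetric] sum_distrib_right[symmetric] D_def B_def)
  also have "\<dots> = (D + \<bar>B - A\<bar>) / A" using A1 B1 by (simp add: field_simps)
  also have "\<dots> \<le> 2 * D / A" using AB A1 by (simp add: divide_right_mono abs_minus_commute)
  also have "\<dots> \<le> 2 * D" using A1 D0 by (simp add: divide_le_eq mult_le_cancel_left1)
  finally show ?thesis unfolding A_def[symmetric] B_def[symmetric] D_def[symmetric] .
qed



locale tw =
  fixes T :: "'a::metric_space \<Rightarrow> 'a" and N :: nat and V :: "nat \<Rightarrow> 'a set"
    and S :: "nat \<Rightarrow> nat set" and c :: "nat \<Rightarrow> nat \<Rightarrow> nat" and d :: nat
    and f :: "nat \<Rightarrow> 'a \<Rightarrow> real" and L :: nat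
  assumes contT: "continuous_on UNIV T"
  and finS: "\<And>i. i < N \<Longrightarrow> finite (S i)"
  and col: "\<And>i n. i < N \<Longrightarrow> n \<in> S i \<Longrightarrow> c i n \<le> d"
  and disj: "\<And>i n j m x. i < N \<Longrightarrow> n \<in> S i \<Longrightarrow> j < N \<Longrightarrow> m \<in> S j \<Longrightarrow> (i, n) \<noteq> (j, m)
              \<Longrightarrow> c i n = c j m \<Longrightarrow> (T ^^ n) x \<in> V i \<Longrightarrow> (T ^^ m) x \<in> V j \<Longrightarrow> False"
  and fcont: "\<And>i. continuous_on UNIV (f i)"
  and fnn: "\<And>i x. 0 \<le> f i x" and fle: "\<And>i x. f i x \<le> 1"
  and fsupp: "\<And>i x. f i x \<noteq> 0 \<Longrightarrow> x \<in> V i"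
  and Lpos: "0 < L"
  and cover: "\<And>x. \<exists>i<N. \<exists>n\<in>S i. f i ((T ^^ n) x) = 1 \<and> (\<forall>e\<in>{- int L..int L}. e + int n \<in> int ` S i)"
begin

definition Cs :: "nat \<Rightarrow> real set" where
  "Cs i = {r. \<exists>z::int. r = of_int z \<and> z \<notin> int ` S i}"

definition W :: "nat \<Rightarrow> int \<Rightarrow> real" where
  "W i m = min 1 (infdist (of_int (- m)) (Cs i) / real L)"

definition A :: "'a \<Rightarrow> int \<Rightarrow> real" where
  "A x m = (\<Sum>i<N. f i ((T ^^ nat (- m)) x) * W i m)"

definition Kb :: nat where
  "Kb = Max (insert 0 (\<Union>i<N. S i))"

definition win :: "int set" where
  "win = {- int Kb..0}"

definition Z :: "'a \<Rightarrow> real" where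
  "Z x = (\<Sum>m\<in>win. A x m)"

definition phi :: "'a \<Rightarrow> int \<Rightarrow> real" where
  "phi x = (\<lambda>m. A x m / Z x)"

lemma W_nn: "0 \<le> W i m"
  unfolding W_def using Lpos by (simp add: infdist_nonneg)

lemma W_le1: "W i m \<le> 1"
  unfolding W_def by simp

lemma W_zero: "- m \<notin> int ` S i \<Longrightarrow> W i m = 0"
proof -
  assume "- m \<notin> int ` S i"
  then have "of_int (- m) \<in> Cs i" unfolding Cs_def by blast
  then show ?thesis unfolding W_def by simp
qed

lemma W_lip: "\<bar>W i m - W i m'\<bar> \<le> \<bar>real_of_int (m - m')\<bar> / real L"
proof -
  have "\<bar>infdist (of_int (- m)) (Cs i) - infdist (of_int (- m')) (Cs i)\<bar>
        \<le> dist (of_int (- m) :: real) (of_int (- m'))"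
    by (rule infdist_triangle_abs)
  also have "\<dots> = \<bar>real_of_int (m - m')\<bar>" by (simp add: dist_real_def)
  finally have h: "\<bar>infdist (of_int (- m)) (Cs i) - infdist (of_int (- m')) (Cs i)\<bar> \<le> \<bar>real_of_int (m - m')\<bar>" .
  have "\<bar>W i m - W i m'\<bar> \<le> \<bar>infdist (of_int (- m)) (Cs i) / real L - infdist (of_int (- m')) (Cs i) / real L\<bar>"
    unfolding W_def by linarith
  also have "\<dots> = \<bar>infdist (of_int (- m)) (Cs i) - infdist (of_int (- m')) (Cs i)\<bar> / real L"
    using Lpos by (simp add: diff_divide_distrib[symmetric])
  also have "\<dots> \<le> \<bar>real_of_int (m - m')\<bar> / real L"
    using h Lpos by (simp add: divide_right_mono)
  finally show ?thesis .
qed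

lemma W_one:
  assumes "\<forall>e\<in>{- int L..int L}. e + int n \<in> int ` S i"
  shows "W i (- int n) = 1"
proof -
  have ne: "Cs i \<noteq> {}"
  proof -
    have "(-1::int) \<notin> int ` S i" by auto
    then have "of_int (-1) \<in> Cs i" unfolding Cs_def by blast
    then show ?thesis by blast
  qed
  have "real L \<le> infdist (of_int (int n)) (Cs i)"
  proof (rule infdist_lower[OF ne])
    fix a assume "a \<in> Cs i"
    then obtain z where z: "a = of_int z" "z \<notin> int ` S i" unfolding Cs_def by blast
    have "\<not> \<bar>z - int n\<bar> \<le> int L"
    proof
      assume "\<bar>z - int n\<bar> \<le> int L"
      then have "z - int n \<in> {- int L..int L}" by auto
      then have "(z - int n) + int n \<in> int ` S i" using assms by blast
      then show False using z(2) by simp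
    qed
    then have "real L \<le> \<bar>real_of_int z - real n\<bar>"
      by (metis (mono_tags, opaque_lifting) of_int_abs of_int_diff of_int_le_iff of_int_of_nat_eq linorder_not_le order_less_imp_le)
    then show "real L \<le> dist (of_int (int n)) a" using z(1) by (simp add: dist_real_def abs_minus_commute)
  qed
  then show ?thesis unfolding W_def using Lpos by simp
qed

lemma finU: "finite (insert 0 (\<Union>i<N. S i))"
  using finS by auto

lemma le_Kb: "i < N \<Longrightarrow> n \<in> S i \<Longrightarrow> n \<le> Kb"
  unfolding Kb_def using finU by (intro Max_ge) auto

lemma A_nn: "0 \<le> A x m"
  unfolding A_def by (intro sum_nonneg mult_nonneg_nonneg fnn W_nn)

lemma A_out: assumes "m \<notin> win" shows "A x m = 0"
proof -
  have "W i m = 0" if "i < N" for i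
  proof (rule W_zero)
    show "- m \<notin> int ` S i"
    proof
      assume "- m \<in> int ` S i"
      then obtain n where n: "n \<in> S i" "- m = int n" by auto
      then have "n \<le> Kb" using le_Kb that by auto
      then show False using assms n(2) unfolding win_def by auto
    qed
  qed
  then show ?thesis unfolding A_def by simp
qed

definition Q :: "'a \<Rightarrow> (nat \<times> nat) set" where
  "Q x = {(i, n). i < N \<and> n \<in> S i \<and> (T ^^ n) x \<in> V i}"

lemma Q_fin: "finite (Q x)"
proof -
  have "Q x \<subseteq> Sigma {..<N} S" unfolding Q_def by auto
  moreover have "finite (Sigma {..<N} S)" using finS by auto
  ultimately show ?thesis using finite_subset by blast
qed

lemma Q_card: "card (Q x) \<le> d + 1"
proof -
  have "inj_on (\<lambda>(i, n). c i n) (Q x)"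
  proof (rule inj_onI, clarify)
    fix i n j m assume a: "(i, n) \<in> Q x" "(j, m) \<in> Q x" "c i n = c j m"
    show "i = j \<and> n = m"
    proof (rule ccontr)
      assume "\<not> (i = j \<and> n = m)"
      then show False using disj[of i n j m x] a unfolding Q_def by auto
    qed
  qed
  moreover have "(\<lambda>(i, n). c i n) ` Q x \<subseteq> {..d}" using col unfolding Q_def by auto
  ultimately have "card (Q x) \<le> card {..d}" by (intro card_inj_on_le) auto
  then show ?thesis by simp
qed

lemma supp_A: "supp_int (A x) \<subseteq> (\<lambda>(i, n). - int n) ` Q x"
proof
  fix m assume "m \<in> supp_int (A x)"
  then have "A x m \<noteq> 0" unfolding supp_int_def by auto
  then obtain i where i: "i < N" "f i ((T ^^ nat (- m)) x) * W i m \<noteq> 0"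
    unfolding A_def by (meson lessThan_iff sum.neutral)
  then have "W i m \<noteq> 0" by auto
  then have "- m \<in> int ` S i" using W_zero by blast
  then obtain n where n: "n \<in> S i" "- m = int n" by auto
  have "(T ^^ n) x \<in> V i" using i(2) fsupp n(2) by (metis mult_eq_0_iff nat_int)
  then have "(i, n) \<in> Q x" using i n unfolding Q_def by auto
  then show "m \<in> (\<lambda>(i, n). - int n) ` Q x" using n(2) by force
qed

lemma supp_A_fin: "finite (supp_int (A x))"
  using supp_A Q_fin by (meson finite_imageI finite_subset)

lemma supp_A_card: "card (supp_int (A x)) \<le> d + 1"
proof -
  have "card (supp_int (A x)) \<le> card ((\<lambda>(i, n). - int n) ` Q x)"
    using supp_A Q_fin by (intro card_mono) auto
  also have "\<dots> \<le> card (Q x)" by (rule card_image_le[OF Q_fin])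
  finally show ?thesis using Q_card[of x] by linarith
qed

lemma Z_ge1: "1 \<le> Z x"
proof -
  obtain i n where i: "i < N" "n \<in> S i" "f i ((T ^^ n) x) = 1"
     "\<forall>e\<in>{- int L..int L}. e + int n \<in> int ` S i"
    using cover[of x] by blast
  have W1: "W i (- int n) = 1" using W_one[OF i(4)] .
  have "1 = f i ((T ^^ nat (- (- int n))) x) * W i (- int n)" using i(3) W1 by simp
  also have "\<dots> \<le> A x (- int n)" unfolding A_def
    using i(1) by (intro member_le_sum mult_nonneg_nonneg fnn W_nn) auto
  also have "\<dots> \<le> Z x" unfolding Z_def using le_Kb[OF i(1,2)]
    by (intro member_le_sum A_nn) (auto simp: win_def)
  finally show ?thesis .
qed

lemma phi_Pd: "phi x \<in> Pd d"
proof -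
  have Zp: "Z x > 0" using Z_ge1[of x] by simp
  have supp: "supp_int (phi x) = supp_int (A x)"
    using Zp unfolding supp_int_def phi_def by auto
  have sw: "supp_int (A x) \<subseteq> win" using A_out unfolding supp_int_def by blast
  have "(\<Sum>m\<in>supp_int (A x). phi x m) = (\<Sum>m\<in>win. phi x m)"
    using sw by (intro sum.mono_neutral_left) (auto simp: win_def supp_int_def phi_def)
  also have "\<dots> = (\<Sum>m\<in>win. A x m) / Z x" unfolding phi_def by (rule sum_divide_distrib[symmetric])
  also have "\<dots> = Z x / Z x" unfolding Z_def ..
  also have "\<dots> = 1" using Zp by simp
  finally show ?thesis unfolding Pd_def using supp supp_A_fin supp_A_card A_nn Zp
    by (auto simp: phi_def)
qed


lemma supp_phi: "supp_int (phi x) \<subseteq> win"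
  using A_out unfolding supp_int_def phi_def by auto

lemma phi_out: "m \<notin> win \<Longrightarrow> phi x m = 0"
  using A_out unfolding phi_def by simp

lemma fT_cont: "continuous_on UNIV (\<lambda>x. f i ((T ^^ k) x))"
  using continuous_on_compose2[OF fcont cont_funpow[OF contT]] by auto

lemma A_cont: "continuous_on UNIV (\<lambda>x. A x m)"
  unfolding A_def by (intro continuous_intros fT_cont)

lemma Z_cont: "continuous_on UNIV Z"
  unfolding Z_def[abs_def] by (intro continuous_intros A_cont)

lemma phi_cont: "continuous_on UNIV (\<lambda>x. phi x m)"
  unfolding phi_def using Z_ge1 by (intro continuous_intros A_cont Z_cont) (metis Z_ge1 not_one_le_zero)

lemma phi_rho_cont: "rho_continuous phi"
  unfolding rho_continuous_def
proof (intro allI impI)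
  fix x :: 'a and e :: real assume e: "e > 0"
  define g where "g y = (\<Sum>m\<in>win. \<bar>phi y m - phi x m\<bar>)" for y
  have "continuous_on UNIV g" unfolding g_def by (intro continuous_intros phi_cont)
  then have "isCont g x" by (simp add: continuous_on_eq_continuous_at)
  then obtain \<delta> where \<delta>: "\<delta> > 0" "\<And>y. dist y x < \<delta> \<Longrightarrow> dist (g y) (g x) < e"
    using e unfolding continuous_at_eps_delta by blast
  have gx: "g x = 0" unfolding g_def by simp
  show "\<exists>\<delta>>0. \<forall>y. dist y x < \<delta> \<longrightarrow> rho (phi y) (phi x) < e"
  proof (intro exI conjI allI impI)
    show "\<delta> > 0" by fact
    fix y assume "dist y x < \<delta>"
    then have "\<bar>g y\<bar> < e" using \<delta>(2) gx by (simp add: dist_real_def)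
    then have "g y < e" by linarith
    moreover have "rho (phi y) (phi x) \<le> g y"
      unfolding rho_def g_def using supp_phi[of y] supp_phi[of x]
      by (intro sum_mono2) (auto simp: win_def)
    ultimately show "rho (phi y) (phi x) < e" by linarith
  qed
qed

lemma A_shift: "A ((T ^^ k) x) m = (\<Sum>i<N. f i ((T ^^ nat (int k - m)) x) * W i m)"
  unfolding A_def
proof (rule sum.cong[OF refl])
  fix i
  show "f i ((T ^^ nat (- m)) ((T ^^ k) x)) * W i m = f i ((T ^^ nat (int k - m)) x) * W i m"
  proof (cases "m \<le> 0")
    case True
    have "(T ^^ nat (- m)) ((T ^^ k) x) = (T ^^ (nat (- m) + k)) x" by (simp add: funpow_add)
    also have "nat (- m) + k = nat (int k - m)" using True by simp
    finally show ?thesis by simp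
  next
    case False
    then have "W i m = 0" by (intro W_zero) auto
    then show ?thesis by simp
  qed
qed

definition win2 :: "nat \<Rightarrow> int set" where
  "win2 k = {- int Kb..int k}"

lemma A_diff_bound:
  "(\<Sum>m\<in>win2 k. \<bar>A ((T ^^ k) x) m - A x (m - int k)\<bar>) \<le> 2 * (d + 1) * (real k / real L)"
proof -
  define t where "t m i = f i ((T ^^ nat (int k - m)) x) * \<bar>W i m - W i (m - int k)\<bar>" for m i
  have t_nn: "0 \<le> t m i" for m i unfolding t_def by (intro mult_nonneg_nonneg fnn) auto
  have t_le: "t m i \<le> real k / real L" for m i
  proof -
    have "\<bar>W i m - W i (m - int k)\<bar> \<le> real k / real L" using W_lip[of i m "m - int k"] by simp
    moreover have "f i ((T ^^ nat (int k - m)) x) \<le> 1" by (rule fle)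
    ultimately show ?thesis unfolding t_def
      using fnn by (meson abs_ge_zero dual_order.trans mult_left_le_one_le mult_mono)
  qed
  have term_b: "\<bar>A ((T ^^ k) x) m - A x (m - int k)\<bar> \<le> (\<Sum>i<N. t m i)" for m
  proof -
    have "A x (m - int k) = (\<Sum>i<N. f i ((T ^^ nat (int k - m)) x) * W i (m - int k))"
      unfolding A_def by simp
    then have "A ((T ^^ k) x) m - A x (m - int k)
       = (\<Sum>i<N. f i ((T ^^ nat (int k - m)) x) * (W i m - W i (m - int k)))"
      unfolding A_shift by (simp add: sum_subtractf right_diff_distrib)
    also have "\<bar>\<dots>\<bar> \<le> (\<Sum>i<N. \<bar>f i ((T ^^ nat (int k - m)) x) * (W i m - W i (m - int k))\<bar>)"
      by (rule sum_abs)
    also have "\<dots> = (\<Sum>i<N. t m i)" unfolding t_def using fnn by (simp add: abs_mult)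
    finally show ?thesis .
  qed
  define P1 where "P1 = (\<lambda>(i, n). (int k - int n, i)) ` Q x"
  define P2 where "P2 = (\<lambda>(i, n). (- int n, i)) ` Q ((T ^^ k) x)"
  define P where "P = P1 \<union> P2"
  have finP: "finite P" unfolding P_def P1_def P2_def using Q_fin by auto
  have cardP: "card P \<le> 2 * (d + 1)"
  proof -
    have "card P \<le> card P1 + card P2" unfolding P_def by (rule card_Un_le)
    moreover have "card P1 \<le> d + 1" unfolding P1_def using card_image_le[OF Q_fin] Q_card
      by (meson le_trans)
    moreover have "card P2 \<le> d + 1" unfolding P2_def using card_image_le[OF Q_fin] Q_card
      by (meson le_trans)
    ultimately show ?thesis by presburger
  qed
  have zero: "(m, i) \<in> P" if "i < N" "t m i \<noteq> 0" for m i
  proof -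
    define z where "z = (T ^^ nat (int k - m)) x"
    have fz: "f i z \<noteq> 0" and Wd: "W i m \<noteq> W i (m - int k)" using that(2) unfolding t_def z_def by auto
    have zV: "z \<in> V i" using fsupp[OF fz] .
    show ?thesis
    proof (cases "W i (m - int k) \<noteq> 0")
      case True
      then have "- (m - int k) \<in> int ` S i" using W_zero by blast
      then obtain n where n: "n \<in> S i" "int k - m = int n" by auto
      have "(T ^^ n) x \<in> V i" using zV n(2) unfolding z_def by (metis nat_int)
      then have "(i, n) \<in> Q x" using that(1) n(1) unfolding Q_def by auto
      moreover have "(m, i) = (int k - int n, i)" using n(2) by simp
      ultimately show ?thesis unfolding P_def P1_def by force
    next
      case False
      then have "W i m \<noteq> 0" using Wd by auto
      then have "- m \<in> int ` S i" using W_zero by blast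
      then obtain n where n: "n \<in> S i" "- m = int n" by auto
      have "z = (T ^^ (n + k)) x" unfolding z_def using n(2)
        by (metis add.commute nat_int of_nat_add diff_minus_eq_add uminus_add_conv_diff)
      then have "(T ^^ n) ((T ^^ k) x) \<in> V i" using zV by (simp add: funpow_add)
      then have "(i, n) \<in> Q ((T ^^ k) x)" using that(1) n(1) unfolding Q_def by auto
      moreover have "(m, i) = (- int n, i)" using n(2) by simp
      ultimately show ?thesis unfolding P_def P2_def by force
    qed
  qed
  have "(\<Sum>m\<in>win2 k. \<bar>A ((T ^^ k) x) m - A x (m - int k)\<bar>) \<le> (\<Sum>m\<in>win2 k. \<Sum>i<N. t m i)"
    by (intro sum_mono term_b)
  also have "\<dots> = (\<Sum>(m, i)\<in>win2 k \<times> {..<N}. t m i)"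
    by (rule sum.cartesian_product)
  also have "\<dots> = (\<Sum>(m, i)\<in>(win2 k \<times> {..<N}) \<inter> P. t m i)"
    using zero by (intro sum.mono_neutral_right) (auto simp: win2_def)
  also have "\<dots> \<le> (\<Sum>(m, i)\<in>P. t m i)"
    using finP t_nn by (intro sum_mono2) auto
  also have "\<dots> \<le> real (card P) * (real k / real L)"
    using t_le by (intro sum_bounded_above) auto
  also have "\<dots> \<le> real (2 * (d + 1)) * (real k / real L)"
    using cardP Lpos by (intro mult_right_mono) auto
  finally show ?thesis by simp
qed

lemma phi_shift_win:
  "(\<Sum>m\<in>win2 k. \<bar>phi ((T ^^ k) x) m - phi x (m - int k)\<bar>) \<le> 4 * (d + 1) * (real k / real L)"
proof -
  define y where "y = (T ^^ k) x"
  have fin: "finite (win2 k)" unfolding win2_def by simp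
  have sub: "win \<subseteq> win2 k" unfolding win_def win2_def by auto
  have Zy: "(\<Sum>m\<in>win2 k. A y m) = Z y" unfolding Z_def
    using sub fin A_out by (intro sum.mono_neutral_left[symmetric]) auto
  have Zx: "(\<Sum>m\<in>win2 k. A x (m - int k)) = Z x"
  proof -
    have inj: "inj_on (\<lambda>m. m - int k) (win2 k)" by (simp add: inj_on_def)
    have "(\<Sum>m\<in>win2 k. A x (m - int k)) = (\<Sum>m'\<in>(\<lambda>m. m - int k) ` win2 k. A x m')"
      using sum.reindex[OF inj, of "A x"] by simp
    also have "\<dots> = (\<Sum>m\<in>win. A x m)"
    proof (rule sum.mono_neutral_right)
      show "finite ((\<lambda>m. m - int k) ` win2 k)" using fin by simp
      show "win \<subseteq> (\<lambda>m. m - int k) ` win2 k"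
      proof
        fix m assume "m \<in> win"
        then have "m + int k \<in> win2 k" unfolding win_def win2_def by auto
        then show "m \<in> (\<lambda>m. m - int k) ` win2 k" by (metis add_diff_cancel image_eqI)
      qed
      show "\<forall>i\<in>(\<lambda>m. m - int k) ` win2 k - win. A x i = 0" using A_out by auto
    qed
    finally show ?thesis unfolding Z_def .
  qed
  have "(\<Sum>m\<in>win2 k. \<bar>phi y m - phi x (m - int k)\<bar>)
     = (\<Sum>m\<in>win2 k. \<bar>A y m / (\<Sum>m\<in>win2 k. A y m) - A x (m - int k) / (\<Sum>m\<in>win2 k. A x (m - int k))\<bar>)"
    unfolding Zy Zx phi_def ..
  also have "\<dots> \<le> 2 * (\<Sum>m\<in>win2 k. \<bar>A y m - A x (m - int k)\<bar>)"
    by (rule norm_lemma[OF fin A_nn A_nn]) (use Zy Zx Z_ge1 in auto)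
  also have "\<dots> \<le> 2 * (2 * (d + 1) * (real k / real L))"
    unfolding y_def by (intro mult_left_mono A_diff_bound) auto
  also have "\<dots> = 4 * (d + 1) * (real k / real L)" by (simp add: algebra_simps)
  finally show ?thesis unfolding y_def .
qed

lemma phi_shift_any:
  assumes "finite F"
  shows "(\<Sum>m\<in>F. \<bar>phi ((T ^^ k) x) m - phi x (m - int k)\<bar>) \<le> 4 * (d + 1) * (real k / real L)"
proof -
  have fin: "finite (win2 k)" unfolding win2_def by simp
  have "(\<Sum>m\<in>F. \<bar>phi ((T ^^ k) x) m - phi x (m - int k)\<bar>)
      \<le> (\<Sum>m\<in>F \<union> win2 k. \<bar>phi ((T ^^ k) x) m - phi x (m - int k)\<bar>)"
    using assms fin by (intro sum_mono2) auto
  also have "\<dots> = (\<Sum>m\<in>win2 k. \<bar>phi ((T ^^ k) x) m - phi x (m - int k)\<bar>)"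
  proof (rule sum.mono_neutral_right)
    show "finite (F \<union> win2 k)" using assms fin by simp
    show "win2 k \<subseteq> F \<union> win2 k" by auto
    show "\<forall>i\<in>F \<union> win2 k - win2 k. \<bar>phi ((T ^^ k) x) i - phi x (i - int k)\<bar> = 0"
    proof
      fix m assume "m \<in> F \<union> win2 k - win2 k"
      then have "m \<notin> win" "m - int k \<notin> win" unfolding win_def win2_def by auto
      then show "\<bar>phi ((T ^^ k) x) m - phi x (m - int k)\<bar> = 0" using phi_out by simp
    qed
  qed
  also have "\<dots> \<le> 4 * (d + 1) * (real k / real L)" by (rule phi_shift_win)
  finally show ?thesis .
qed

lemma supp_alpha: "supp_int (alpha n \<mu>) = (\<lambda>m. m + n) ` supp_int \<mu>"
  unfolding supp_int_def alpha_def by (auto simp: image_iff) (metis diff_add_cancel)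

lemma equiv_bound:
  assumes "y \<in> Tn T n x"
  shows "rho (phi y) (alpha n (phi x)) \<le> 4 * (d + 1) * (real (nat \<bar>n\<bar>) / real L)"
proof -
  define F where "F = supp_int (phi y) \<union> supp_int (alpha n (phi x))"
  have finF: "finite F" unfolding F_def supp_alpha using phi_Pd unfolding Pd_def by auto
  have rho_eq: "rho (phi y) (alpha n (phi x)) = (\<Sum>m\<in>F. \<bar>phi y m - phi x (m - n)\<bar>)"
    unfolding rho_def F_def alpha_def ..
  show ?thesis
  proof (cases "n \<ge> 0")
    case True
    define k where "k = nat n"
    have nk: "n = int k" using True k_def by simp
    have y: "y = (T ^^ k) x" using assms True unfolding Tn_def k_def by simp
    show ?thesis unfolding rho_eq using phi_shift_any[OF finF, of k x] unfolding y nk by simp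
  next
    case False
    define k where "k = nat (- n)"
    have nk: "n = - int k" using False k_def by simp
    have x: "x = (T ^^ k) y" using assms False unfolding Tn_def k_def by simp
    have inj: "inj_on (\<lambda>m. m + int k) F" by (simp add: inj_on_def)
    have "(\<Sum>m\<in>F. \<bar>phi y m - phi x (m - n)\<bar>) = (\<Sum>m\<in>F. \<bar>phi x (m + int k) - phi y ((m + int k) - int k)\<bar>)"
      unfolding nk by (simp add: abs_minus_commute)
    also have "\<dots> = (\<Sum>m'\<in>(\<lambda>m. m + int k) ` F. \<bar>phi x m' - phi y (m' - int k)\<bar>)"
      using sum.reindex[OF inj, of "\<lambda>m'. \<bar>phi x m' - phi y (m' - int k)\<bar>"] by simp
    also have "\<dots> \<le> 4 * (d + 1) * (real k / real L)"
      unfolding x by (rule phi_shift_any) (use finF in simp)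
    finally show ?thesis unfolding rho_eq using nk by simp
  qed
qed

end


lemma tow_to_am:
  fixes T :: "'a::metric_space \<Rightarrow> 'a"
  assumes cpt: "compact (UNIV :: 'a set)" and contT: "continuous_on UNIV T" and tow: "tow_ok T d"
  shows "am_ok T d"
  unfolding am_ok_def
proof (intro allI impI, elim conjE)
  fix E :: "int set" and \<epsilon> :: real
  assume finE: "finite E" and \<epsilon>: "\<epsilon> > 0"
  define K0 where "K0 = Max (insert 0 ((\<lambda>n. nat \<bar>n\<bar>) ` E))"
  have K0: "nat \<bar>n\<bar> \<le> K0" if "n \<in> E" for n
    unfolding K0_def using finE that by (intro Max_ge) auto
  define L where "L = nat \<lceil>4 * (real d + 1) * real K0 / \<epsilon>\<rceil> + 1"
  have Lpos: "0 < L" unfolding L_def by simp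
  have Lbig: "4 * (real d + 1) * real K0 / \<epsilon> < real L" unfolding L_def by linarith
  then have Lbig2: "4 * (real d + 1) * real K0 < \<epsilon> * real L" using \<epsilon> by (simp add: divide_less_eq mult.commute)
  define E' where "E' = {- int L..int L}"
  have "finite E'" unfolding E'_def by simp
  note H = tow[unfolded tow_ok_def, rule_format, OF this]
  obtain N V S where ALL:
     "(\<forall>i<N. open (V i) \<and> finite (S i)) \<and>
        (\<forall>i<N. \<forall>m\<in>S i. \<forall>n\<in>S i. m \<noteq> n \<longrightarrow>
            (T ^^ m) -` closure (V i) \<inter> (T ^^ n) -` closure (V i) = {}) \<and>
        (\<exists>c::nat \<Rightarrow> nat \<Rightarrow> nat.
            (\<forall>i<N. \<forall>n\<in>S i. c i n \<le> d) \<and>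
            (\<forall>i<N. \<forall>n\<in>S i. \<forall>j<N. \<forall>m\<in>S j. (i, n) \<noteq> (j, m) \<and> c i n = c j m \<longrightarrow>
                (T ^^ n) -` V i \<inter> (T ^^ m) -` V j = {})) \<and>
        (\<Union>i\<in>{..<N}. \<Union>n\<in>S i. (T ^^ n) -` V i) = UNIV \<and>
        (\<forall>x. \<exists>i<N. \<exists>n\<in>S i. x \<in> (T ^^ n) -` V i \<and> (\<forall>e\<in>E'. e + int n \<in> int ` S i))"
    using H by (elim exE) (rule that)
  have VS: "\<forall>i<N. open (V i) \<and> finite (S i)" using ALL by (rule conjunct1)
  have col: "\<exists>c::nat \<Rightarrow> nat \<Rightarrow> nat.
            (\<forall>i<N. \<forall>n\<in>S i. c i n \<le> d) \<and>
            (\<forall>i<N. \<forall>n\<in>S i. \<forall>j<N. \<forall>m\<in>S j. (i, n) \<noteq> (j, m) \<and> c i n = c j m \<longrightarrow>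
                (T ^^ n) -` V i \<inter> (T ^^ m) -` V j = {})"
    using ALL by (elim conjE)
  have cov: "\<forall>x. \<exists>i<N. \<exists>n\<in>S i. x \<in> (T ^^ n) -` V i \<and> (\<forall>e\<in>E'. e + int n \<in> int ` S i)"
    using ALL by (elim conjE)
  obtain c where c1: "\<forall>i<N. \<forall>n\<in>S i. c i n \<le> d"
    and c2: "\<forall>i<N. \<forall>n\<in>S i. \<forall>j<N. \<forall>m\<in>S j. (i, n) \<noteq> (j, m) \<and> c i n = c j m \<longrightarrow>
                (T ^^ n) -` V i \<inter> (T ^^ m) -` V j = {}"
    using col by (elim exE conjE)
  define good where "good i n \<longleftrightarrow> i < N \<and> n \<in> S i \<and> (\<forall>e\<in>E'. e + int n \<in> int ` S i)" for i n
  define \<G> where "\<G> = {(T ^^ n) -` V i | i n. good i n}"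
  have cvG: "UNIV \<subseteq> \<Union>\<G>"
  proof
    fix x :: 'a
    obtain i n where "good i n" "x \<in> (T ^^ n) -` V i" using cov unfolding good_def by blast
    then show "x \<in> \<Union>\<G>" unfolding \<G>_def by blast
  qed
  have opG: "open G" if Gin: "G \<in> \<G>" for G
  proof -
    obtain i n where gn: "good i n" "G = (T ^^ n) -` V i" using Gin unfolding \<G>_def by blast
    have "open (V i)" using VS gn(1) unfolding good_def by blast
    then show ?thesis unfolding gn(2) by (rule open_vimage[OF _ cont_funpow[OF contT]])
  qed
  obtain e where e: "0 < e" "\<And>x. \<exists>G\<in>\<G>. ball x e \<subseteq> G"
    using Heine_Borel_lemma[OF cpt cvG opG] by auto
  define K where "K i n = (\<Inter>a\<in>{a. (T ^^ n) a \<notin> V i}. {x. e \<le> dist x a})" for i n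
  have Kcl: "closed (K i n)" for i n
    unfolding K_def by (intro closed_INT ballI closed_Collect_le continuous_intros)
  have KV: "(T ^^ n) x \<in> V i" if "x \<in> K i n" for x i n
    using that e(1) unfolding K_def by force
  define C where "C i = (\<Union>n\<in>{n. good i n}. (T ^^ n) ` K i n)" for i
  have bumps: "\<exists>g. continuous_on UNIV g \<and> (\<forall>z. 0 \<le> g z) \<and> (\<forall>z. g z \<le> (1::real))
       \<and> (\<forall>z\<in>C i. g z = 1) \<and> (\<forall>z. g z \<noteq> 0 \<longrightarrow> z \<in> V i)" for i
  proof (cases "i < N")
    case True
    have fin: "finite {n. good i n}"
      using VS True unfolding good_def by (metis (no_types, lifting) finite_subset mem_Collect_eq subsetI)
    have "compact (C i)" unfolding C_def
    proof (intro compact_UN fin)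
      fix n
      have "compact (UNIV \<inter> K i n)" using cpt Kcl by (rule compact_Int_closed)
      then show "compact ((T ^^ n) ` K i n)"
        using compact_continuous_image[OF continuous_on_subset[OF cont_funpow[OF contT]]] by auto
    qed
    moreover have "open (V i)" using VS True by auto
    moreover have "C i \<subseteq> V i" unfolding C_def using KV by auto
    ultimately show ?thesis by (rule bump) blast
  next
    case False
    then have "C i = {}" unfolding C_def good_def by auto
    then show ?thesis by (intro exI[of _ "\<lambda>_. 0"]) (auto simp: continuous_on_const)
  qed
  have "\<forall>i. \<exists>g. continuous_on UNIV g \<and> (\<forall>z. 0 \<le> g z) \<and> (\<forall>z. g z \<le> (1::real))
       \<and> (\<forall>z\<in>C i. g z = 1) \<and> (\<forall>z. g z \<noteq> 0 \<longrightarrow> z \<in> V i)"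
    by (intro allI bumps)
  from choice[OF this] obtain f where F: "\<forall>i. continuous_on UNIV (f i) \<and> (\<forall>z. 0 \<le> f i z) \<and> (\<forall>z. f i z \<le> (1::real))
       \<and> (\<forall>z\<in>C i. f i z = 1) \<and> (\<forall>z. f i z \<noteq> 0 \<longrightarrow> z \<in> V i)"
    by (elim exE) (rule that)
  have f: "\<And>i. continuous_on UNIV (f i)" "\<And>i z. 0 \<le> f i z" "\<And>i z. f i z \<le> 1"
    "\<And>i z. z \<in> C i \<Longrightarrow> f i z = 1" "\<And>i z. f i z \<noteq> 0 \<Longrightarrow> z \<in> V i"
    using F by simp_all
  interpret tw T N V S c d f L
  proof
    show "continuous_on UNIV T" by (rule contT)
    show "\<And>i. i < N \<Longrightarrow> finite (S i)" using VS by auto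
    show "\<And>i n. i < N \<Longrightarrow> n \<in> S i \<Longrightarrow> c i n \<le> d" using c1 by auto
    show "\<And>i n j m x. i < N \<Longrightarrow> n \<in> S i \<Longrightarrow> j < N \<Longrightarrow> m \<in> S j \<Longrightarrow> (i, n) \<noteq> (j, m)
              \<Longrightarrow> c i n = c j m \<Longrightarrow> (T ^^ n) x \<in> V i \<Longrightarrow> (T ^^ m) x \<in> V j \<Longrightarrow> False"
      using c2 by blast
    show "\<And>i. continuous_on UNIV (f i)" by (rule f(1))
    show "\<And>i x. 0 \<le> f i x" by (rule f(2))
    show "\<And>i x. f i x \<le> 1" by (rule f(3))
    show "\<And>i x. f i x \<noteq> 0 \<Longrightarrow> x \<in> V i" by (rule f(5))
    show "0 < L" by (rule Lpos)
    show "\<exists>i<N. \<exists>n\<in>S i. f i ((T ^^ n) x) = 1 \<and> (\<forall>e\<in>{- int L..int L}. e + int n \<in> int ` S i)" for x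
    proof -
      obtain G where G: "G \<in> \<G>" "ball x e \<subseteq> G" using e(2) by blast
      then obtain i n where gd: "good i n" and Gd: "G = (T ^^ n) -` V i" unfolding \<G>_def by blast
      have "x \<in> K i n" unfolding K_def
      proof (intro InterI, clarify)
        fix a assume "(T ^^ n) a \<notin> V i"
        then have "a \<notin> ball x e" using G(2) Gd by auto
        then show "e \<le> dist x a" by (simp add: not_less)
      qed
      then have "(T ^^ n) x \<in> C i" unfolding C_def using gd by blast
      then have "f i ((T ^^ n) x) = 1" by (rule f(4))
      then show ?thesis using gd unfolding good_def E'_def by blast
    qed
  qed
  show "\<exists>\<phi>. (\<forall>x. \<phi> x \<in> Pd d) \<and> rho_continuous \<phi> \<and> equivariant_approx T E \<epsilon> \<phi>"
  proof (intro exI conjI allI)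
    show "phi x \<in> Pd d" for x by (rule phi_Pd)
    show "rho_continuous phi" by (rule phi_rho_cont)
    show "equivariant_approx T E \<epsilon> phi" unfolding equivariant_approx_def
    proof (intro ballI allI)
      fix n x y assume n: "n \<in> E" and y: "y \<in> Tn T n x"
      have "rho (phi y) (alpha n (phi x)) \<le> 4 * (d + 1) * (real (nat \<bar>n\<bar>) / real L)"
        by (rule equiv_bound[OF y])
      also have "\<dots> \<le> 4 * (d + 1) * (real K0 / real L)"
        using K0[OF n] Lpos by (intro mult_left_mono divide_right_mono) auto
      also have "\<dots> = (4 * (real d + 1) * real K0) / real L" by simp
      also have "\<dots> < \<epsilon>"
      proof -
        have L0: "0 < real L" using Lpos by simp
        show ?thesis using Lbig2 pos_divide_less_eq[OF L0, of "4 * (real d + 1) * real K0" \<epsilon>]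
          by (simp add: mult.commute)
      qed
      finally show "rho (phi y) (alpha n (phi x)) < \<epsilon>" .
    qed
  qed
qed


theorem lemma5p7:
  fixes T :: "'a::metric_space \<Rightarrow> 'a"
  assumes "compact (UNIV :: 'a set)"
    and "surj T"
    and "local_homeo T"
    and "finite (Sp_l T)"
    and "\<forall>x\<in>Sp_l T. \<not> x islimpt (UNIV :: 'a set)"
  shows "dim_am T \<le> dim_tow T"
proof -
  have "isCont T x" for x
  proof -
    obtain U g where U: "open U" "x \<in> U" "homeomorphism U (T ` U) T g"
      using assms(3) unfolding local_homeo_def by blast
    have "continuous_on U T" using homeomorphism_cont1[OF U(3)] .
    then show ?thesis using U(1,2) continuous_on_eq_continuous_at by blast
  qed
  then have contT: "continuous_on UNIV T" by (simp add: continuous_at_imp_continuous_on)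
  show ?thesis
  proof (cases "\<exists>d. tow_ok T d")
    case True
    define d0 where "d0 = (LEAST d. tow_ok T d)"
    have "tow_ok T d0" unfolding d0_def using True by (rule LeastI_ex)
    then have am: "am_ok T d0" by (rule tow_to_am[OF assms(1) contT])
    then have "dim_am T = enat (LEAST d. am_ok T d)" unfolding dim_am_def by auto
    also have "\<dots> \<le> enat d0" using am by (simp add: Least_le)
    also have "\<dots> = dim_tow T" unfolding dim_tow_def d0_def using True by simp
    finally show ?thesis .
  next
    case False
    then have "dim_tow T = \<infinity>" unfolding dim_tow_def by auto
    then show ?thesis by simp
  qed
qed

end
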